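(* Let $a,b,c,d$ be non-negative integers with $\gcd(a,b,c,d)=1$ satisfying $(a+b+c+d)^2=2(a^2+b^2+c^2+d^2)$. Then the sum of any two of them is a sum of two squares of integers; e.g. $a+b=p^2+q^2$ for some $p,q\in\mathbb{Z}$. *)

theory Defs
  imports Main
begin

definition sum_two_sq :: "int \<Rightarrow> bool" where
  "sum_two_sq n \<longleftrightarrow> (\<exists>p q :: int. n = p^2 + q^2)"

end

theory Submission imports Defs "HOL-Computational_Algebra.Primes" begin

lemma sqrt_exists: "\<exists>s::nat. s^2 \<le> m \<and> m < (s+1)^2"
proof (induction m)
  case 0 then show ?case by (rule exI[of _ 0]) simp
next
  case (Suc m)
  then obtain s where s: "s^2 \<le> m" "m < (s+1)^2" by blast
  show ?case
  proof (cases "Suc m < (s+1)^2")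
    case True then show ?thesis using s by (intro exI[of _ s]) simp
  next
    case False
    then have "Suc m = (s+1)^2" using s by simp
    moreover have "(s+1)^2 < (s+2)^2" by (simp add: power_strict_mono)
    ultimately show ?thesis by (intro exI[of _ "s+1"]) simp
  qed
qed

lemma sqrt_exists_int:
  assumes "(n::int) \<ge> 0" shows "\<exists>s::int. s \<ge> 0 \<and> s^2 \<le> n \<and> n < (s+1)^2"
proof -
  obtain s where s: "s^2 \<le> nat n" "nat n < (s+1)^2" using sqrt_exists by blast
  have "int (s^2) \<le> n" "n < int ((s+1)^2)" using s assms by linarith+
  then show ?thesis by (intro exI[of _ "int s"]) (simp add: add.commute)
qed

lemma thue:
  fixes n r :: int
  assumes n: "n \<ge> 1" and r: "n dvd r^2 + 1"
  shows "sum_two_sq n"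
proof -
  obtain s where s: "s \<ge> 0" "s^2 \<le> n" "n < (s+1)^2" using sqrt_exists_int[of n] n by auto
  show ?thesis
  proof (cases "s^2 = n")
    case True then show ?thesis unfolding sum_two_sq_def by (intro exI[of _ s] exI[of _ 0]) simp
  next
    case False
    with s have sn: "s^2 < n" by simp
    define A where "A = {0..s} \<times> {0..s}"
    define f where "f = (\<lambda>(i,j). (i - r*j) mod n)"
    have cardA: "card A = nat ((s+1)^2)" unfolding A_def using s
      by (simp add: card_cartesian_product power2_eq_square nat_mult_distrib)
    have fA: "f ` A \<subseteq> {0..n-1}" unfolding f_def using n by auto
    have "\<not> inj_on f A"
    proof
      assume "inj_on f A"
      then have "card A \<le> card {0..n-1}" using card_inj_on_le fA by blast
      moreover have "int (card A) = (s+1)^2" using cardA by simp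
      moreover have "int (card {0..n-1}) = n" using n by simp
      ultimately show False using s(3) by linarith
    qed
    then obtain i j i' j' where ij: "(i,j) \<in> A" "(i',j') \<in> A" "(i,j) \<noteq> (i',j')"
        "f (i,j) = f (i',j')"
      unfolding inj_on_def by auto
    define u where "u = i - i'"
    define v where "v = j - j'"
    have uv: "\<bar>u\<bar> \<le> s" "\<bar>v\<bar> \<le> s" "u \<noteq> 0 \<or> v \<noteq> 0"
      using ij(1,2,3) unfolding u_def v_def A_def by auto
    have "n dvd (i - r*j) - (i' - r*j')" using ij(4) unfolding f_def
      by (simp add: mod_eq_dvd_iff)
    then have "n dvd u - r*v" unfolding u_def v_def by (simp add: algebra_simps)
    then obtain k where k: "u = r*v + n*k" by (metis dvd_def diff_eq_eq add.commute)
    obtain l where l: "r^2 + 1 = n*l" using r by (auto simp: dvd_def)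
    have "u^2 + v^2 = v^2*(r^2+1) + n*(2*r*v*k + n*k^2)"
      unfolding k by (simp add: power2_eq_square algebra_simps)
    also have "\<dots> = n * (v^2*l + 2*r*v*k + n*k^2)" unfolding l by (simp add: algebra_simps)
    finally obtain m where m: "u^2+v^2 = n*m" by blast
    have pos: "u^2 + v^2 > 0" using uv(3) by (simp add: sum_power2_gt_zero_iff)
    have "\<bar>u\<bar>^2 \<le> s^2" "\<bar>v\<bar>^2 \<le> s^2" using uv(1,2)
      by (intro power_mono; simp)+
    then have "u^2 \<le> s^2" "v^2 \<le> s^2" by simp_all
    then have "u^2+v^2 < 2*n" using sn by linarith
    then have "n*m < n*2" using m by simp
    then have "m < 2" using n by simp
    moreover have "m > 0" using pos m n by (simp add: zero_less_mult_iff)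
    ultimately have "m = 1" by simp
    then show ?thesis unfolding sum_two_sq_def using m by auto
  qed
qed

lemma claimA:
  fixes n X Y :: int
  assumes n: "n \<ge> 1" and d: "n dvd X^2 + Y^2" and c: "coprime n Y"
  shows "sum_two_sq n"
proof -
  obtain u v where uv: "u*Y + v*n = 1" using bezout_int[of Y n] c
    by (metis coprime_commute coprime_iff_gcd_eq_1)
  define r where "r = X*u"
  have "(r^2+1)*Y^2 = X^2*(u*Y)^2 + Y^2" unfolding r_def by (simp add: power2_eq_square algebra_simps)
  also have "u*Y = 1 - v*n" using uv by simp
  also have "X^2*(1 - v*n)^2 + Y^2 = (X^2+Y^2) + n*(X^2*(v^2*n - 2*v))"
    by (simp add: power2_eq_square algebra_simps)
  finally have "n dvd (r^2+1)*Y^2" using d by simp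
  moreover have "coprime n (Y^2)" using c by simp
  ultimately have "n dvd r^2+1" using coprime_dvd_mult_left_iff by blast
  then show ?thesis using thue n by blast
qed

lemma sts_mult:
  assumes "sum_two_sq x" "sum_two_sq y" shows "sum_two_sq (x*y)"
proof -
  obtain a b c d where "x = a^2+b^2" "y = c^2+d^2" using assms unfolding sum_two_sq_def by blast
  then have "x*y = (a*c - b*d)^2 + (a*d+b*c)^2" by (simp add: power2_eq_square algebra_simps)
  then show ?thesis unfolding sum_two_sq_def by blast
qed

lemma G:
  fixes n t X Y :: int
  assumes "n \<ge> 0" "n * t = X^2 + Y^2"
    "\<And>p. prime p \<Longrightarrow> odd p \<Longrightarrow> p dvd n \<Longrightarrow> p dvd t \<Longrightarrow> p dvd X \<Longrightarrow> p dvd Y \<Longrightarrow> False"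
  shows "sum_two_sq n"
  using assms
proof (induction "nat n" arbitrary: n t X Y rule: less_induct)
  case less
  show ?case
  proof (cases "n = 0")
    case True then show ?thesis unfolding sum_two_sq_def by (intro exI[of _ 0]) simp
  next
    case False
    with less.prems have npos: "n \<ge> 1" by simp
    show ?thesis
    proof (cases "\<exists>p. prime p \<and> p dvd n \<and> p dvd X \<and> p dvd Y")
      case False
      have "coprime n Y"
      proof (rule ccontr)
        assume nc: "\<not> coprime n Y"
        have "gcd n Y \<noteq> 0" using npos by simp
        moreover have "\<not> is_unit (gcd n Y)" using nc by (simp add: coprime_iff_gcd_eq_1)
        ultimately obtain p where p: "p dvd gcd n Y" "prime p" using prime_divisor_exists by blast
        then have "p dvd n" "p dvd Y" by auto
        have "p dvd n*t" using \<open>p dvd n\<close> by simp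
        moreover have "p dvd Y^2" using \<open>p dvd Y\<close> by (simp add: power2_eq_square)
        ultimately have "p dvd X^2" using less.prems(2) by (metis dvd_add_left_iff)
        then have "p dvd X" using p(2) prime_dvd_power by blast
        then show False using False p(2) \<open>p dvd n\<close> \<open>p dvd Y\<close> by blast
      qed
      moreover have "n dvd X^2+Y^2" using less.prems(2) by (metis dvd_triv_left)
      ultimately show ?thesis using claimA npos by blast
    next
      case True
      then obtain p where p: "prime p" "p dvd n" "p dvd X" "p dvd Y" by blast
      have p2: "p \<ge> 2" using p(1) prime_ge_2_int by blast
      obtain X' Y' where XY: "X = p*X'" "Y = p*Y'" using p(3,4) by (auto simp: dvd_def)
      have eq: "n*t = p^2*(X'^2+Y'^2)" using less.prems(2) XY by (simp add: power2_eq_square algebra_simps)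
      show ?thesis
      proof (cases "p^2 dvd n")
        case True
        then obtain n' where n': "n = p^2*n'" by (auto simp: dvd_def)
        have p2pos: "p^2 > 0" using p2 by simp
        have "p^2*n' > 0" using npos n' by simp
        then have n'pos: "n' \<ge> 1" using p2pos by (simp add: zero_less_mult_iff)
        have "n' < n"
        proof -
          have "p^2 \<ge> 4" using p2 power_mono[of 2 p 2] by simp
          then have "4*n' \<le> p^2*n'" using n'pos by (intro mult_right_mono) auto
          then show ?thesis using n' n'pos by linarith
        qed
        have "p^2*(n' * t) = p^2*(X'^2 + Y'^2)" using eq n' by (simp add: algebra_simps)
        then have e': "n' * t = X'^2 + Y'^2" using p2pos by simp
        have c': "False" if "prime q" "odd q" "q dvd n'" "q dvd t" "q dvd X'" "q dvd Y'" for q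
          using less.prems(3)[of q] that n' XY by auto
        have "sum_two_sq n'"
          using less.hyps[of n' t X' Y'] \<open>n' < n\<close> n'pos e' c' by auto
        moreover have "sum_two_sq (p^2)" unfolding sum_two_sq_def by (intro exI[of _ p] exI[of _ 0]) simp
        ultimately show ?thesis using n' sts_mult by metis
      next
        case False
        obtain n1 where n1: "n = p*n1" using p(2) by (auto simp: dvd_def)
        have "\<not> p dvd n1" using False n1 by (auto simp: power2_eq_square)
        have "p*(n1*t) = p*(p*(X'^2+Y'^2))" using eq n1 by (simp add: power2_eq_square algebra_simps)
        then have "n1*t = p*(X'^2+Y'^2)" using p2 by simp
        then have "p dvd n1*t" by simp
        then have pt: "p dvd t" using \<open>\<not> p dvd n1\<close> p(1) prime_dvd_multD by blast
        then have "even p" using less.prems(3)[of p] p by blast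
        then have p2': "p = 2" using p(1) p2 prime_odd_int[of p] by force
        obtain t' where t': "t = 2*t'" using pt p2' by (auto simp: dvd_def)
        have e': "n1 * t' = X'^2 + Y'^2" using \<open>n1*t = p*(X'^2+Y'^2)\<close> t' p2' by simp
        have n1pos: "n1 \<ge> 1" using npos n1 p2' by simp
        have "n1 < n" using n1 p2' n1pos by simp
        have c': "False" if "prime q" "odd q" "q dvd n1" "q dvd t'" "q dvd X'" "q dvd Y'" for q
          using less.prems(3)[of q] that n1 t' XY by auto
        have "sum_two_sq n1"
          using less.hyps[of n1 t' X' Y'] \<open>n1 < n\<close> n1pos e' c' by auto
        moreover have "sum_two_sq 2" unfolding sum_two_sq_def by (intro exI[of _ 1] exI[of _ 1]) simp
        ultimately show ?thesis using n1 p2' sts_mult by metis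
      qed
    qed
  qed
qed

lemma pair:
  fixes a b c d :: int
  assumes "a \<ge> 0" "b \<ge> 0" "c \<ge> 0" "d \<ge> 0"
    and pr: "\<And>p. prime p \<Longrightarrow> odd p \<Longrightarrow> p dvd a \<Longrightarrow> p dvd b \<Longrightarrow> p dvd c \<Longrightarrow> p dvd d \<Longrightarrow> False"
    and eq: "(a + b + c + d)^2 = 2 * (a^2 + b^2 + c^2 + d^2)"
  shows "sum_two_sq (a + b)"
proof -
  have "even ((a+b+c+d)^2)" using eq by simp
  then have "even (a+b+c+d)" by simp
  then obtain k where k: "a+b+c+d = 2*k" by blast
  define X where "X = a+c-k"
  define Y where "Y = k-b-c"
  have dd: "d = 2*k-a-b-c" using k by simp
  have "2*(X^2+Y^2 - (a+b)*(c+d)) = 2*(a^2+b^2+c^2+d^2) - (a+b+c+d)^2"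
    unfolding X_def Y_def dd by (simp add: power2_eq_square algebra_simps)
  then have e: "(a+b)*(c+d) = X^2+Y^2" using eq by simp
  have XpY: "X+Y = a-b" "X-Y = c-d" unfolding X_def Y_def using dd by simp_all
  show ?thesis
  proof (rule G[OF _ e])
    show "0 \<le> a+b" using assms by simp
  next
    fix p :: int assume p: "prime p" "odd p" "p dvd a+b" "p dvd c+d" "p dvd X" "p dvd Y"
    have h1: "p dvd a-b" using dvd_add[OF p(5) p(6)] XpY(1) by simp
    have h2: "p dvd c-d" using dvd_diff[OF p(5) p(6)] XpY(2) by simp
    have q: "a+b+(a-b) = 2*a" "a+b-(a-b) = 2*b" "c+d+(c-d) = 2*c" "c+d-(c-d) = 2*d" by simp_all
    have "p dvd 2*a" using dvd_add[OF p(3) h1] unfolding q .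
    have "p dvd 2*b" using dvd_diff[OF p(3) h1] unfolding q .
    have "p dvd 2*c" using dvd_add[OF p(4) h2] unfolding q .
    have "p dvd 2*d" using dvd_diff[OF p(4) h2] unfolding q .
    note * = \<open>p dvd 2*a\<close> \<open>p dvd 2*b\<close> \<open>p dvd 2*c\<close> \<open>p dvd 2*d\<close>
    have "\<not> p dvd 2"
    proof
      assume "p dvd 2"
      then have "p \<le> 2" by (rule zdvd_imp_le) simp
      moreover have "p \<ge> 2" using p(1) prime_ge_2_int by blast
      ultimately have "p = 2" by simp
      then show False using p(2) by simp
    qed
    then have "p dvd a" "p dvd b" "p dvd c" "p dvd d" using * p(1) prime_dvd_multD by blast+
    then show False using pr p(1,2) by blast
  qed
qed

theorem proposition1:
  fixes a b c d :: int
  assumes "a \<ge> 0" "b \<ge> 0" "c \<ge> 0" "d \<ge> 0"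
    and "gcd (gcd a b) (gcd c d) = 1"
    and "(a + b + c + d)^2 = 2 * (a^2 + b^2 + c^2 + d^2)"
  shows "sum_two_sq (a + b) \<and> sum_two_sq (a + c) \<and> sum_two_sq (a + d) \<and>
         sum_two_sq (b + c) \<and> sum_two_sq (b + d) \<and> sum_two_sq (c + d)"
proof -
  have pr: False if "prime p" "p dvd a" "p dvd b" "p dvd c" "p dvd d" for p :: int
  proof -
    have "p dvd gcd (gcd a b) (gcd c d)" using that by simp
    then have "p dvd 1" using assms(5) by simp
    then show False using not_prime_unit that(1) by blast
  qed
  note eq = assms(6)
  have e2: "(a + c + b + d)^2 = 2 * (a^2 + c^2 + b^2 + d^2)" using eq by (simp add: ac_simps)
  have e3: "(a + d + b + c)^2 = 2 * (a^2 + d^2 + b^2 + c^2)" using eq by (simp add: ac_simps)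
  have e4: "(b + c + a + d)^2 = 2 * (b^2 + c^2 + a^2 + d^2)" using eq by (simp add: ac_simps)
  have e5: "(b + d + a + c)^2 = 2 * (b^2 + d^2 + a^2 + c^2)" using eq by (simp add: ac_simps)
  have e6: "(c + d + a + b)^2 = 2 * (c^2 + d^2 + a^2 + b^2)" using eq by (simp add: ac_simps)
  have "sum_two_sq (a + b)" by (rule pair[OF assms(1,2,3,4) _ eq]) (rule pr)
  moreover have "sum_two_sq (a + c)" by (rule pair[OF assms(1,3,2,4) _ e2]) (rule pr)
  moreover have "sum_two_sq (a + d)" by (rule pair[OF assms(1,4,2,3) _ e3]) (rule pr)
  moreover have "sum_two_sq (b + c)" by (rule pair[OF assms(2,3,1,4) _ e4]) (rule pr)
  moreover have "sum_two_sq (b + d)" by (rule pair[OF assms(2,4,1,3) _ e5]) (rule pr)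
  moreover have "sum_two_sq (c + d)" by (rule pair[OF assms(3,4,1,2) _ e6]) (rule pr)
  ultimately show ?thesis by blast
qed
end
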